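(* Let $F$ be a forest and $G$ be a graph, both on $n$ vertices. Let $\mathrm{comp}(F)$ be the number of components of $F$ that contain at least one edge, and let $\ell(F)$ be the number of vertices of $F$ of degree $1$. If $$3\Delta(G)+\ell(F)-2\,\mathrm{comp}(F)<n,$$ then $F$ and $G$ pack.
   Context: All graphs are finite and simple; $\Delta(G)$ is the maximum degree of $G$. For graphs $G$ and $H$ with $|V(G)|\ge |V(H)|$, we say $G$ and $H$ pack if there is an injective function $f:V(H)\to V(G)$ such that for every edge $xy\in E(H)$, $f(x)f(y)\notin E(G)$ (equivalently, both can be embedded in $K_{|V(G)|}$ with no edge in common). *)

theory Defs
  imports Main
begin

definition graph :: "'a set \<Rightarrow> 'a set set \<Rightarrow> bool" where
  "graph V E \<longleftrightarrow> finite V \<and> (\<forall>e\<in>E. \<exists>x y. x \<noteq> y \<and> x \<in> V \<and> y \<in> V \<and> e = {x, y})"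

definition degree :: "'a set set \<Rightarrow> 'a \<Rightarrow> nat" where
  "degree E v = card {e\<in>E. v \<in> e}"

definition max_degree :: "'a set \<Rightarrow> 'a set set \<Rightarrow> nat" where
  "max_degree V E = Max (insert 0 (degree E ` V))"

definition is_cycle :: "'a set set \<Rightarrow> 'a list \<Rightarrow> bool" where
  "is_cycle E vs \<longleftrightarrow> length vs \<ge> 3 \<and> distinct vs \<and>
     (\<forall>i < length vs - 1. {vs ! i, vs ! Suc i} \<in> E) \<and> {last vs, hd vs} \<in> E"

definition forest :: "'a set \<Rightarrow> 'a set set \<Rightarrow> bool" where
  "forest V E \<longleftrightarrow> graph V E \<and> (\<nexists>vs. is_cycle E vs)"

definition conn_rel :: "'a set \<Rightarrow> 'a set set \<Rightarrow> ('a \<times> 'a) set" where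
  "conn_rel V E = (Id_on V \<union> {(x, y). {x, y} \<in> E \<and> x \<in> V \<and> y \<in> V})\<^sup>*"

definition components :: "'a set \<Rightarrow> 'a set set \<Rightarrow> 'a set set" where
  "components V E = V // conn_rel V E"

definition comp_nontrivial :: "'a set \<Rightarrow> 'a set set \<Rightarrow> nat" where
  "comp_nontrivial V E = card {C \<in> components V E. \<exists>e\<in>E. e \<subseteq> C}"

definition leaves :: "'a set \<Rightarrow> 'a set set \<Rightarrow> nat" where
  "leaves V E = card {v\<in>V. degree E v = 1}"

definition packs :: "'a set \<Rightarrow> 'a set set \<Rightarrow> 'b set \<Rightarrow> 'b set set \<Rightarrow> bool" where
  "packs VG EG VH EH \<longleftrightarrow> (\<exists>f. inj_on f VH \<and> f ` VH \<subseteq> VG \<and>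
     (\<forall>x\<in>VH. \<forall>y\<in>VH. {x, y} \<in> EH \<longrightarrow> {f x, f y} \<notin> EG))"

end

theory Submission
  imports Defs
begin

lemma graph_edge: "graph V E \<Longrightarrow> e \<in> E \<Longrightarrow> \<exists>x y. x \<noteq> y \<and> x \<in> V \<and> y \<in> V \<and> e = {x,y}"
  unfolding graph_def by blast

lemma graph_finite_E: "graph V E \<Longrightarrow> finite E"
proof -
  assume g: "graph V E"
  have "e \<subseteq> V" if "e \<in> E" for e
  proof -
    from graph_edge[OF g that] obtain x y where "x \<in> V" "y \<in> V" "e = {x,y}" by blast
    then show ?thesis by simp
  qed
  hence "E \<subseteq> Pow V" by auto
  moreover have "finite V" using g unfolding graph_def by simp
  ultimately show ?thesis by (simp add: finite_subset)
qed

lemma graph_sub: "graph V E \<Longrightarrow> E' \<subseteq> E \<Longrightarrow> graph V E'"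
  unfolding graph_def by blast

lemma forest_sub: "forest V E \<Longrightarrow> E' \<subseteq> E \<Longrightarrow> forest V E'"
proof -
  assume F: "forest V E" and s: "E' \<subseteq> E"
  have g: "graph V E" and nc: "\<nexists>vs. is_cycle E vs" using F unfolding forest_def by auto
  have g': "graph V E'" using graph_sub[OF g s] .
  have nc': "\<not> is_cycle E' vs" for vs
  proof
    assume c: "is_cycle E' vs"
    have c1: "length vs \<ge> 3" "distinct vs" using c unfolding is_cycle_def by auto
    have c2: "\<forall>i < length vs - 1. {vs ! i, vs ! Suc i} \<in> E"
    proof (intro allI impI)
      fix i assume "i < length vs - 1"
      then have "{vs ! i, vs ! Suc i} \<in> E'" using c unfolding is_cycle_def by auto
      then show "{vs ! i, vs ! Suc i} \<in> E" using s by (rule subsetD[rotated])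
    qed
    have "{last vs, hd vs} \<in> E'" using c unfolding is_cycle_def by auto
    then have c3: "{last vs, hd vs} \<in> E" using s by (rule subsetD[rotated])
    have "is_cycle E vs" unfolding is_cycle_def using c1 c2 c3 by simp
    then show False using nc by auto
  qed
  show ?thesis unfolding forest_def using g' nc' by simp
qed

lemma edge_pair: "graph V E \<Longrightarrow> {a,b} \<in> E \<Longrightarrow> a \<noteq> b \<and> a \<in> V \<and> b \<in> V"
proof -
  assume g: "graph V E" and e: "{a,b} \<in> E"
  from graph_edge[OF g e] obtain x y where h: "x \<noteq> y" "x \<in> V" "y \<in> V" "{a,b} = {x,y}" by blast
  then have "(a = x \<and> b = y) \<or> (a = y \<and> b = x)" by (simp add: doubleton_eq_iff)
  then show ?thesis using h by auto
qed

lemma card_nb: "finite E \<Longrightarrow> card {q\<in>A. {p,q} \<in> E} \<le> degree E p"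
  unfolding degree_def
  by (rule card_inj_on_le[of "\<lambda>q. {p,q}"]) (auto simp: inj_on_def doubleton_eq_iff)

lemma leaf_exists:
  assumes F: "forest V E" and ne: "E \<noteq> {}"
  shows "\<exists>u w. {u,w} \<in> E \<and> {e\<in>E. u\<in>e} = {{u,w}}"
proof -
  have g: "graph V E" and nc: "\<not>(\<exists>vs. is_cycle E vs)" using F unfolding forest_def by auto
  have finV: "finite V" using g unfolding graph_def by auto
  define P where "P vs \<longleftrightarrow> distinct vs \<and> set vs \<subseteq> V \<and> length vs \<ge> 2 \<and> (\<forall>i < length vs - 1. {vs!i, vs!Suc i} \<in> E)" for vs
  obtain e where "e \<in> E" using ne by auto
  then obtain a b where ab: "a \<noteq> b" "a \<in> V" "b \<in> V" "{a,b} \<in> E" using graph_edge[OF g] by metis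
  have "P [a,b]" unfolding P_def using ab by auto
  moreover have "\<forall>vs. P vs \<longrightarrow> length vs < card V + 1"
    unfolding P_def by (metis card_mono distinct_card finV less_Suc_eq_le Suc_eq_plus1)
  ultimately obtain vs where Pvs: "P vs" and mx: "\<forall>ys. P ys \<longrightarrow> length ys \<le> length vs"
    using Lattices_Big.ex_has_greatest_nat[of P "[a,b]" length "card V + 1"] by blast
  define L where "L = length vs"
  have L2: "L \<ge> 2" and dist: "distinct vs" and sV: "set vs \<subseteq> V" and adj: "\<forall>i < L - 1. {vs!i, vs!Suc i} \<in> E"
    using Pvs unfolding P_def L_def by auto
  define u where "u = vs ! (L - 1)"
  define w where "w = vs ! (L - 2)"
  have "vs \<noteq> []" using L2 L_def by auto
  then have ulast: "last vs = u" unfolding u_def L_def by (simp add: last_conv_nth)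
  have s2: "Suc (L-2) = L-1" using L2 by arith
  have "{w,u} \<in> E" using adj[rule_format, of "L-2"] L2 s2 unfolding u_def w_def by simp
  hence uw: "{u,w} \<in> E" by (simp add: insert_commute)
  have "{e\<in>E. u\<in>e} \<subseteq> {{u,w}}"
  proof
    fix e assume e: "e \<in> {e\<in>E. u\<in>e}"
    then obtain z where ez: "e = {u,z}" "z \<noteq> u" "z \<in> V"
      using graph_edge[OF g, of e] by auto
    have "z \<in> set vs"
    proof (rule ccontr)
      assume zn: "z \<notin> set vs"
      have "distinct (vs @ [z])" using dist zn by simp
      moreover have "set (vs @ [z]) \<subseteq> V" using sV ez by simp
      moreover have "2 \<le> length (vs @ [z])" using L2 L_def by simp
      moreover have "\<forall>i < length (vs @ [z]) - 1. {(vs @ [z]) ! i, (vs @ [z]) ! Suc i} \<in> E"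
      proof (intro allI impI)
        fix i assume i: "i < length (vs @ [z]) - 1"
        show "{(vs @ [z]) ! i, (vs @ [z]) ! Suc i} \<in> E"
        proof (cases "i < L - 1")
          case True
          hence "Suc i < L" by arith
          then show ?thesis using adj L2 True by (simp add: nth_append L_def)
        next
          case False then have iL1: "i = L - 1" using i L_def by simp
          have "L - 1 < L" using L2 by arith
          then have a1: "(vs @ [z]) ! i = u" using iL1 L_def u_def by (simp add: nth_append)
          have "Suc i = length vs" using iL1 L2 L_def by arith
          then have a2: "(vs @ [z]) ! Suc i = z" by (simp add: nth_append)
          show ?thesis using e ez a1 a2 by simp
        qed
      qed
      ultimately have "P (vs @ [z])" unfolding P_def by blast
      then show False using mx L_def by fastforce
    qed
    then obtain i where i: "i < L" "vs ! i = z" by (metis in_set_conv_nth L_def)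
    have "i \<noteq> L - 1" using i ez u_def by auto
    show "e \<in> {{u,w}}"
    proof (cases "i = L - 2")
      case True then show ?thesis using i ez w_def by simp
    next
      case False
      hence iL: "i + 3 \<le> L" using i \<open>i \<noteq> L-1\<close> by arith
      define cs where "cs = drop i vs"
      have c1: "3 \<le> length cs" using iL cs_def L_def by simp
      have c2: "distinct cs" using dist cs_def by simp
      have c3: "\<forall>j < length cs - 1. {cs ! j, cs ! Suc j} \<in> E"
      proof (intro allI impI)
        fix j assume "j < length cs - 1"
        then have j: "i + j < L - 1" using cs_def L_def by simp
        have "cs ! j = vs ! (i+j)" "cs ! Suc j = vs ! Suc (i+j)" using cs_def L_def iL by simp_all
        then show "{cs ! j, cs ! Suc j} \<in> E" using adj j by simp
      qed
      have "last cs = u" using cs_def ulast iL L_def by simp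
      moreover have "hd cs = z" using cs_def i L_def by (simp add: hd_drop_conv_nth)
      ultimately have c4: "{last cs, hd cs} \<in> E" using e ez by simp
      have "is_cycle E cs" unfolding is_cycle_def using c1 c2 c3 c4 by blast
      then show ?thesis using nc by blast
    qed
  qed
  moreover have "{{u,w}} \<subseteq> {e\<in>E. u\<in>e}" using uw by auto
  ultimately show ?thesis using uw by blast
qed


definition sdeg :: "'a set \<Rightarrow> 'a set set \<Rightarrow> nat" where
  "sdeg V E = (\<Sum>v\<in>V. degree E v - 2)"

lemma degree_remove:
  assumes "finite E" "{u,w} \<in> E"
  shows "degree (E - {{u,w}}) v = degree E v - (if v = u \<or> v = w then 1 else 0)"
proof -
  have eq: "{e\<in>E - {{u,w}}. v\<in>e} = {e\<in>E. v\<in>e} - {{u,w}}" by auto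
  have fin: "finite {e\<in>E. v\<in>e}" using assms by simp
  show ?thesis unfolding degree_def eq card_Diff_singleton_if using assms(2) fin by auto
qed

lemma maxdeg_ge: "graph VG EG \<Longrightarrow> p \<in> VG \<Longrightarrow> degree EG p \<le> max_degree VG EG"
  unfolding max_degree_def graph_def by (intro Max_ge) auto

lemma pack_main:
  assumes "forest V E" "graph VG EG" "card V = card VG"
    "3 * max_degree VG EG + sdeg V E < card V"
  shows "packs VG EG V E"
  using assms
proof (induction "card E" arbitrary: E rule: less_induct)
  case less
  have F: "forest V E" and G: "graph VG EG" and cV: "card V = card VG"
    and hyp: "3 * max_degree VG EG + sdeg V E < card V" using less.prems by auto
  have g: "graph V E" using F unfolding forest_def by auto
  have finV: "finite V" and finVG: "finite VG" using g G unfolding graph_def by auto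
  have finE: "finite E" using graph_finite_E[OF g] .
  have finEG: "finite EG" using graph_finite_E[OF G] .
  define D where "D = max_degree VG EG"
  have Dp: "degree EG p \<le> D" if "p \<in> VG" for p using maxdeg_ge[OF G that] D_def by simp
  show ?case
  proof (cases "E = {}")
    case True
    obtain f where "f ` V \<subseteq> VG" "inj_on f V" using card_le_inj[OF finV finVG] cV by auto
    then show ?thesis unfolding packs_def using True by auto
  next
    case False
    obtain u w where uw: "{u,w} \<in> E" and ustar: "{e\<in>E. u\<in>e} = {{u,w}}"
      using leaf_exists[OF F False] by blast
    have uwV: "u \<noteq> w" "u \<in> V" "w \<in> V" using edge_pair[OF g uw] by auto
    define E' where "E' = E - {{u,w}}"
    have F': "forest V E'" using forest_sub[OF F] E'_def by auto
    have g': "graph V E'" using F' unfolding forest_def by auto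
    have finE': "finite E'" using finE E'_def by simp
    have cE': "card E' < card E" using E'_def card_Diff1_less[OF finE uw] by simp
    have deg': "degree E' v = degree E v - (if v = u \<or> v = w then 1 else 0)" for v
      using degree_remove[OF finE uw] E'_def by simp
    have sd: "sdeg V E' \<le> sdeg V E" unfolding sdeg_def
      by (rule sum_mono) (simp add: deg')
    have "packs VG EG V E'"
      using less.hyps[OF cE' F' G cV] hyp sd D_def by simp
    then obtain f where inj: "inj_on f V" and fim: "f ` V \<subseteq> VG"
      and fp: "\<forall>x\<in>V. \<forall>y\<in>V. {x,y} \<in> E' \<longrightarrow> {f x, f y} \<notin> EG"
      unfolding packs_def by blast
    have Eiff: "{x,y} \<in> E \<longleftrightarrow> {x,y} \<in> E' \<or> {x,y} = {u,w}" for x y using E'_def uw by auto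
    show ?thesis
    proof (cases "{f u, f w} \<in> EG")
      case False
      have "\<forall>x\<in>V. \<forall>y\<in>V. {x,y} \<in> E \<longrightarrow> {f x, f y} \<notin> EG"
      proof (intro ballI impI)
        fix x y assume xy: "x \<in> V" "y \<in> V" "{x,y} \<in> E"
        show "{f x, f y} \<notin> EG"
        proof (cases "{x,y} = {u,w}")
          case True
          then have "{f x, f y} = {f u, f w}" by (auto simp: doubleton_eq_iff insert_commute)
          then show ?thesis using False by simp
        next
          case False then show ?thesis using xy fp Eiff by blast
        qed
      qed
      then show ?thesis unfolding packs_def using inj fim by blast
    next
      case True
      define NG where "NG p = {q\<in>VG. {p,q} \<in> EG}" for p
      have cNG: "card (NG p) \<le> D" if "p \<in> VG" for p
        using card_nb[OF finEG, of VG p] Dp[OF that] NG_def by simp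
      have finNG: "finite (NG p)" for p using finVG NG_def by simp
      define B1 where "B1 = {x\<in>V. f x \<in> insert (f w) (NG (f w))}"
      define Y where "Y = {y\<in>V. f y \<in> NG (f u)}"
      define NE where "NE y = {x\<in>V. {y,x} \<in> E'}" for y
      define B2 where "B2 = (\<Union>y\<in>Y. NE y)"
      have fu: "f u \<in> VG" and fw: "f w \<in> VG" using fim uwV by auto
      have finY: "finite Y" using finV Y_def by simp
      have YV: "Y \<subseteq> V" using Y_def by auto
      have cB1: "card B1 \<le> D + 1"
      proof -
        have "inj_on f B1" using inj_on_subset[OF inj] B1_def by auto
        then have "card B1 \<le> card (insert (f w) (NG (f w)))"
          by (rule card_inj_on_le) (auto simp: B1_def finNG)
        also have "... \<le> card (NG (f w)) + 1" using finNG by (simp add: card_insert_if)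
        finally show ?thesis using cNG[OF fw] by simp
      qed
      have cY: "card Y \<le> D"
      proof -
        have "inj_on f Y" using inj_on_subset[OF inj] Y_def by auto
        then have "card Y \<le> card (NG (f u))"
          by (rule card_inj_on_le) (auto simp: Y_def finNG)
        then show ?thesis using cNG[OF fu] by simp
      qed
      have cB2: "card B2 \<le> (\<Sum>y\<in>Y. degree E' y)"
      proof -
        have "card B2 \<le> (\<Sum>y\<in>Y. card (NE y))" unfolding B2_def by (rule card_UN_le[OF finY])
        also have "... \<le> (\<Sum>y\<in>Y. degree E' y)"
          by (rule sum_mono) (simp add: NE_def card_nb[OF finE'])
        finally show ?thesis .
      qed
      have wY: "w \<in> Y" using True fw uwV unfolding Y_def NG_def by simp
      have dw1: "degree E w \<ge> 1"
      proof -
        have "{u,w} \<in> {e\<in>E. w\<in>e}" using uw by simp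
        moreover have "finite {e\<in>E. w\<in>e}" using finE by simp
        ultimately show ?thesis unfolding degree_def by (metis card_0_eq empty_iff less_one not_le)
      qed
      have s1: "(\<Sum>y\<in>Y. degree E' y) = degree E' w + (\<Sum>y\<in>Y-{w}. degree E' y)"
        using sum.remove[OF finY wY] .
      have s2: "(\<Sum>y\<in>Y-{w}. degree E' y) \<le> (\<Sum>y\<in>Y-{w}. 2 + (degree E y - 2))"
      proof (rule sum_mono)
        fix y show "degree E' y \<le> 2 + (degree E y - 2)" using deg'[of y] by (simp split: if_splits)
      qed
      have s3: "(\<Sum>y\<in>Y-{w}. 2 + (degree E y - 2)) = 2 * card (Y - {w}) + (\<Sum>y\<in>Y-{w}. degree E y - 2)"
      proof -
        have "(\<Sum>y\<in>Y-{w}. 2 + (degree E y - 2)) = (\<Sum>y\<in>Y-{w}. (2::nat)) + (\<Sum>y\<in>Y-{w}. degree E y - 2)"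
          by (rule sum.distrib)
        then show ?thesis by simp
      qed
      have s4: "(\<Sum>y\<in>Y-{w}. degree E y - 2) \<le> (\<Sum>v\<in>V-{w}. degree E v - 2)"
        by (rule sum_mono2) (use finV YV in auto)
      have s5: "sdeg V E = (degree E w - 2) + (\<Sum>v\<in>V-{w}. degree E v - 2)"
        unfolding sdeg_def using sum.remove[OF finV uwV(3)] .
      have s6: "card (Y - {w}) = card Y - 1" using wY finY by simp
      have s7: "card Y \<ge> 1" using wY finY by (metis card_0_eq empty_iff less_one not_le)
      have s8: "degree E' w = degree E w - 1" using deg'[of w] by simp
      define A where "A = (\<Sum>y\<in>Y-{w}. degree E' y)"
      define T where "T = (\<Sum>v\<in>V-{w}. degree E v - 2)"
      define Sy where "Sy = (\<Sum>y\<in>Y. degree E' y)"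
      define cy where "cy = card Y"
      define dw where "dw = degree E w"
      define dw' where "dw' = degree E' w"
      define sd where "sd = sdeg V E"
      define m where "m = (\<Sum>y\<in>Y-{w}. degree E y - 2)"
      have t1: "Sy = dw' + A" using s1 unfolding Sy_def dw'_def A_def .
      have t2: "A \<le> 2 * (cy - 1) + m" using s2 s3 s6 unfolding A_def m_def cy_def by simp
      have t3: "m \<le> T" using s4 unfolding m_def T_def .
      have t4: "sd = (dw - 2) + T" using s5 unfolding sd_def dw_def T_def .
      have t5: "dw' + 1 \<le> 2 + (dw - 2)" using s8 dw1 unfolding dw'_def dw_def by arith
      have t6: "A + 2 \<le> 2 * cy + T" using t2 t3 s7 unfolding cy_def by linarith
      have sumb: "Sy + 1 \<le> 2 * cy + sd" using t1 t4 t5 t6 by linarith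
      have "card (B1 \<union> B2) \<le> card B1 + card B2" by (rule card_Un_le)
      also have "... < card V"
      proof -
        have "3 * D + sd < card V" using hyp unfolding D_def sd_def .
        moreover have "card B2 \<le> Sy" using cB2 unfolding Sy_def .
        moreover have "cy \<le> D" using cY unfolding cy_def .
        ultimately show ?thesis using cB1 sumb by linarith
      qed
      finally have lt: "card (B1 \<union> B2) < card V" .
      have "\<not> V \<subseteq> B1 \<union> B2"
      proof
        assume "V \<subseteq> B1 \<union> B2"
        moreover have "finite (B1 \<union> B2)"
          using finV by (rule finite_subset[rotated]) (auto simp: B1_def B2_def NE_def)
        ultimately have "card V \<le> card (B1 \<union> B2)" by (rule card_mono[rotated])
        then show False using lt by simp
      qed
      then obtain x where x: "x \<in> V" "x \<notin> B1" "x \<notin> B2" by blast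
      have fx: "f x \<in> VG" using fim x by auto
      have "u \<in> B1" using True fu uwV unfolding B1_def NG_def by (simp add: insert_commute)
      hence xu: "x \<noteq> u" using x by auto
      have "w \<in> B1" using uwV unfolding B1_def by simp
      hence xw: "x \<noteq> w" using x by auto
      have fxw: "{f x, f w} \<notin> EG" using x fx unfolding B1_def NG_def by (auto simp: insert_commute)
      have xB2: "\<And>b. b \<in> V \<Longrightarrow> {x,b} \<in> E' \<Longrightarrow> {f u, f b} \<notin> EG"
      proof -
        fix b assume b: "b \<in> V" "{x,b} \<in> E'"
        have "b \<notin> Y"
        proof
          assume "b \<in> Y"
          then have "x \<in> B2" using b x unfolding B2_def NE_def by (auto simp: insert_commute)
          then show False using x by simp
        qed
        then show "{f u, f b} \<notin> EG" using b fim unfolding Y_def NG_def by auto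
      qed
      define g where "g v = (if v = u then f x else if v = x then f u else f v)" for v
      define sw where "sw v = (if v = u then x else if v = x then u else v)" for v
      have gsw: "g v = f (sw v)" for v by (simp add: g_def sw_def)
      have swV: "sw v \<in> V" if "v \<in> V" for v using that x uwV by (simp add: sw_def)
      have swinj: "a = b" if "sw a = sw b" for a b using that by (auto simp: sw_def split: if_splits)
      have ginj: "inj_on g V"
      proof (rule inj_onI)
        fix a b assume ab: "a \<in> V" "b \<in> V" "g a = g b"
        then have "f (sw a) = f (sw b)" using gsw by simp
        then have "sw a = sw b" using inj_onD[OF inj] swV ab by blast
        then show "a = b" using swinj by blast
      qed
      have gim: "g ` V \<subseteq> VG" using fim x uwV unfolding g_def by auto
      have nou: "a \<noteq> u" if "{a,b} \<in> E'" for a b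
      proof
        assume "a = u"
        then have "{a,b} \<in> {e\<in>E. u\<in>e}" using that E'_def by auto
        then have "{a,b} = {u,w}" using ustar by auto
        then show False using that E'_def by auto
      qed
      have gu: "g u = f x" by (simp add: g_def)
      have gx: "g x = f u" using xu by (simp add: g_def)
      have gw: "g w = f w" using xw uwV by (simp add: g_def)
      have go: "g v = f v" if "v \<noteq> u" "v \<noteq> x" for v using that by (simp add: g_def)
      have "\<forall>a\<in>V. \<forall>b\<in>V. {a,b} \<in> E \<longrightarrow> {g a, g b} \<notin> EG"
      proof (intro ballI impI)
        fix a b assume ab: "a \<in> V" "b \<in> V" "{a,b} \<in> E"
        show "{g a, g b} \<notin> EG"
        proof (cases "{a,b} = {u,w}")
          case True
          then have "(a = u \<and> b = w) \<or> (a = w \<and> b = u)" by (simp add: doubleton_eq_iff)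
          then have "{g a, g b} = {f x, f w}" using gu gw by (auto simp: insert_commute)
          then show ?thesis using fxw by simp
        next
          case False
          then have e': "{a,b} \<in> E'" using E'_def ab by auto
          have au: "a \<noteq> u" using nou[OF e'] .
          have "{b,a} \<in> E'" using e' by (simp add: insert_commute)
          then have bu: "b \<noteq> u" using nou by blast
          have abn: "a \<noteq> b" using edge_pair[OF g' e'] by simp
          show ?thesis
          proof (cases "a = x")
            case True
            then have "g a = f u" "g b = f b" using gx go[of b] abn bu by auto
            then show ?thesis using xB2[of b] ab e' True by simp
          next
            case ax: False
            show ?thesis
            proof (cases "b = x")
              case True
              then have "g b = f u" "g a = f a" using gx go[of a] abn au by auto
              moreover have "{x,a} \<in> E'" using e' True by (simp add: insert_commute)
              ultimately show ?thesis using xB2[of a] ab by (simp add: insert_commute)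
            next
              case False
              then have "g a = f a" "g b = f b" using go ax au bu by auto
              then show ?thesis using fp ab e' by simp
            qed
          qed
        qed
      qed
      then show ?thesis unfolding packs_def using ginj gim by blast
    qed
  qed
qed


lemma conn_trans: "(a,b) \<in> conn_rel V E \<Longrightarrow> (b,c) \<in> conn_rel V E \<Longrightarrow> (a,c) \<in> conn_rel V E"
  unfolding conn_rel_def by (rule rtrancl_trans)

lemma conn_refl: "(a,a) \<in> conn_rel V E"
  unfolding conn_rel_def by simp

lemma conn_sym: "(a,b) \<in> conn_rel V E \<Longrightarrow> (b,a) \<in> conn_rel V E"
proof -
  have "sym (Id_on V \<union> {(x, y). {x, y} \<in> E \<and> x \<in> V \<and> y \<in> V})"
    by (auto simp: sym_def insert_commute)
  then have "sym (conn_rel V E)" unfolding conn_rel_def by (rule sym_rtrancl)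
  then show "(a,b) \<in> conn_rel V E \<Longrightarrow> (b,a) \<in> conn_rel V E" unfolding sym_def by blast
qed

lemma conn_edge: "{a,b} \<in> E \<Longrightarrow> a \<in> V \<Longrightarrow> b \<in> V \<Longrightarrow> (a,b) \<in> conn_rel V E"
  unfolding conn_rel_def by (rule r_into_rtrancl) auto

lemma conn_mono: "E' \<subseteq> E \<Longrightarrow> conn_rel V E' \<subseteq> conn_rel V E"
  unfolding conn_rel_def by (rule rtrancl_mono) auto

lemma conn_class: assumes "(c,a) \<in> conn_rel V E" shows "conn_rel V E `` {a} = conn_rel V E `` {c}"
proof
  show "conn_rel V E `` {a} \<subseteq> conn_rel V E `` {c}"
  proof
    fix x assume "x \<in> conn_rel V E `` {a}"
    then have "(a,x) \<in> conn_rel V E" by simp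
    then show "x \<in> conn_rel V E `` {c}" using conn_trans[OF assms] by simp
  qed
  have ac: "(a,c) \<in> conn_rel V E" using conn_sym[OF assms] .
  show "conn_rel V E `` {c} \<subseteq> conn_rel V E `` {a}"
  proof
    fix x assume "x \<in> conn_rel V E `` {c}"
    then have "(c,x) \<in> conn_rel V E" by simp
    then show "x \<in> conn_rel V E `` {a}" using conn_trans[OF ac] by simp
  qed
qed

lemma components_eq: "components V E = (\<lambda>x. conn_rel V E `` {x}) ` V"
  unfolding components_def quotient_def by auto

lemma comp_leaves:
  assumes "forest V E"
  shows "sdeg V E + 2 * comp_nontrivial V E \<le> leaves V E"
  using assms
proof (induction "card E" arbitrary: E rule: less_induct)
  case less
  have F: "forest V E" using less.prems .
  have g: "graph V E" using F unfolding forest_def by auto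
  have finV: "finite V" using g unfolding graph_def by auto
  have finE: "finite E" using graph_finite_E[OF g] .
  show ?case
  proof (cases "E = {}")
    case True
    have "sdeg V E = 0" unfolding sdeg_def degree_def using True by simp
    moreover have "comp_nontrivial V E = 0" unfolding comp_nontrivial_def using True by simp
    ultimately show ?thesis by simp
  next
    case False
    obtain u w where uw: "{u,w} \<in> E" and ustar: "{e\<in>E. u\<in>e} = {{u,w}}"
      using leaf_exists[OF F False] by blast
    have uwV: "u \<noteq> w" "u \<in> V" "w \<in> V" using edge_pair[OF g uw] by auto
    define E' where "E' = E - {{u,w}}"
    have F': "forest V E'" using forest_sub[OF F] E'_def by auto
    have g': "graph V E'" using F' unfolding forest_def by auto
    have finE': "finite E'" using finE E'_def by simp
    have cE': "card E' < card E" using E'_def card_Diff1_less[OF finE uw] by simp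
    have deg': "degree E' v = degree E v - (if v = u \<or> v = w then 1 else 0)" for v
      using degree_remove[OF finE uw] E'_def by simp
    have IH: "sdeg V E' + 2 * comp_nontrivial V E' \<le> leaves V E'"
      using less.hyps[OF cE' F'] .
    have du: "degree E u = 1" unfolding degree_def using ustar by simp
    have dw1: "degree E w \<ge> 1"
    proof -
      have "{u,w} \<in> {e\<in>E. w\<in>e}" using uw by simp
      moreover have "finite {e\<in>E. w\<in>e}" using finE by simp
      ultimately show ?thesis unfolding degree_def by (metis card_0_eq empty_iff less_one not_le)
    qed
    define c where "c = (if degree E w \<ge> 3 then 1 else 0::nat)"
    have sA: "sdeg V E \<le> sdeg V E' + c"
    proof -
      have "sdeg V E \<le> (\<Sum>v\<in>V. (degree E' v - 2) + (if v = w then c else 0))"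
        unfolding sdeg_def
      proof (rule sum_mono)
        fix v show "degree E v - 2 \<le> (degree E' v - 2) + (if v = w then c else 0)"
          using deg'[of v] du uwV c_def by auto
      qed
      also have "... = sdeg V E' + c" unfolding sdeg_def sum.distrib using finV uwV by simp
      finally show ?thesis .
    qed
    define L where "L = {v\<in>V. degree E v = 1}"
    define L' where "L' = {v\<in>V. degree E' v = 1}"
    have finL: "finite L" using finV L_def by simp
    have uL: "u \<in> L" using du uwV L_def by simp
    have cL0: "card L > 0" using uL finL card_gt_0_iff by blast
    have sL: "leaves V E' + (if degree E w = 1 then 2 else if degree E w = 2 then 0 else 1) \<le> leaves V E"
    proof -
      have lE: "leaves V E = card L" unfolding leaves_def L_def ..
      have lE': "leaves V E' = card L'" unfolding leaves_def L'_def ..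
      consider "degree E w = 1" | "degree E w = 2" | "degree E w \<ge> 3" using dw1 by arith
      then show ?thesis
      proof cases
        case 1
        have "L' \<subseteq> L - {u,w}" using deg' 1 du unfolding L_def L'_def by auto
        then have "card L' \<le> card (L - {u,w})" using finL by (simp add: card_mono)
        moreover have "w \<in> L" using 1 uwV L_def by simp
        moreover have "card {u,w} \<le> card L" using finL uL \<open>w \<in> L\<close> by (intro card_mono) auto
        moreover have "card {u,w} = 2" using uwV by simp
        ultimately have "card L' + 2 \<le> card L" using uL uwV finL by (simp add: card_Diff_subset)
        then show ?thesis using 1 lE lE' by simp
      next
        case 2
        have "L' \<subseteq> insert w (L - {u})" using deg' 2 du unfolding L_def L'_def by auto
        then have "card L' \<le> card (insert w (L - {u}))" using finL by (simp add: card_mono)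
        also have "... \<le> card (L - {u}) + 1" using finL by (simp add: card_insert_if)
        also have "... = card L" using uL finL cL0 by simp
        finally show ?thesis using 2 lE lE' by simp
      next
        case 3
        have "L' \<subseteq> L - {u}" using deg' 3 du unfolding L_def L'_def by auto
        then have "card L' \<le> card (L - {u})" using finL by (simp add: card_mono)
        also have "... = card L - 1" using uL finL by simp
        finally show ?thesis using 3 lE lE' cL0 by simp
      qed
    qed
    define R where "R = conn_rel V E"
    define R' where "R' = conn_rel V E'"
    define CE where "CE = {C \<in> components V E. \<exists>e\<in>E. e \<subseteq> C}"
    define CE' where "CE' = {C \<in> components V E'. \<exists>e\<in>E'. e \<subseteq> C}"
    define good where "good = {C. \<exists>e\<in>E'. e \<subseteq> C}"
    have RR: "R' \<subseteq> R" unfolding R_def R'_def using conn_mono[of E' E V] E'_def by auto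
    have finCE': "finite CE'" unfolding CE'_def components_eq using finV by simp
    have finCE: "finite CE" unfolding CE_def components_eq using finV by simp
    have good_sub: "CE \<inter> good \<subseteq> (\<lambda>D. R `` D) ` CE'"
    proof
      fix C assume C: "C \<in> CE \<inter> good"
      then obtain c where c: "c \<in> V" "C = R `` {c}" unfolding CE_def components_eq R_def by auto
      obtain e where e: "e \<in> E'" "e \<subseteq> C" using C good_def by auto
      obtain a b where ab: "a \<noteq> b" "a \<in> V" "b \<in> V" "e = {a,b}" using graph_edge[OF g' e(1)] by metis
      define D where "D = R' `` {a}"
      have "(a,b) \<in> R'" using conn_edge[of a b E' V] ab e R'_def by simp
      then have "e \<subseteq> D" using ab D_def conn_refl[of a V E'] R'_def by auto
      then have DC: "D \<in> CE'" unfolding CE'_def components_eq D_def R'_def using ab e by auto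
      have "R `` D = R `` {a}"
      proof
        show "R `` D \<subseteq> R `` {a}"
        proof
          fix y assume "y \<in> R `` D"
          then obtain d where d: "d \<in> D" "(d,y) \<in> R" by auto
          then have "(a,d) \<in> R" using D_def RR by auto
          then show "y \<in> R `` {a}" using conn_trans[OF _ d(2)[unfolded R_def]] R_def by simp
        qed
        show "R `` {a} \<subseteq> R `` D" using D_def conn_refl[of a V E'] R'_def by auto
      qed
      also have "... = C" using c e ab conn_class[of c a V E] R_def by auto
      finally show "C \<in> (\<lambda>D. R `` D) ` CE'" using DC by force
    qed
    have bad_sub: "CE - good \<subseteq> {R `` {u}}"
    proof
      fix C assume C: "C \<in> CE - good"
      then obtain c where c: "c \<in> V" "C = R `` {c}" unfolding CE_def components_eq R_def by auto
      obtain e where e: "e \<in> E" "e \<subseteq> C" using C CE_def by auto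
      have "e \<notin> E'" using C e good_def by auto
      then have "e = {u,w}" using e E'_def by auto
      then have "(c,u) \<in> R" using e c by auto
      then show "C \<in> {R `` {u}}" using c conn_class[of c u V E] R_def by auto
    qed
    have bad_empty: "CE - good = {}" if d2: "degree E w \<ge> 2"
    proof (rule ccontr)
      assume "CE - good \<noteq> {}"
      then obtain C where C: "C \<in> CE - good" by auto
      then have Cu: "C = R `` {u}" using bad_sub by auto
      have "\<not> {e\<in>E. w\<in>e} \<subseteq> {{u,w}}"
      proof
        assume "{e\<in>E. w\<in>e} \<subseteq> {{u,w}}"
        then have "card {e\<in>E. w\<in>e} \<le> card {{u,w}}" by (intro card_mono) auto
        then have "degree E w \<le> 1" unfolding degree_def by simp
        then show False using d2 by simp
      qed
      then obtain e2 where e2: "e2 \<in> E" "w \<in> e2" "e2 \<noteq> {u,w}" by auto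
      obtain z where z: "e2 = {w,z}" "z \<in> V" using graph_edge[OF g e2(1)] e2(2) by auto
      have "(u,w) \<in> R" using conn_edge uw uwV R_def by metis
      moreover have "(w,z) \<in> R" using conn_edge e2 z uwV R_def by metis
      ultimately have "(u,z) \<in> R" using conn_trans R_def by metis
      then have "e2 \<subseteq> C" using Cu z \<open>(u,w) \<in> R\<close> by auto
      moreover have "e2 \<in> E'" using e2 E'_def by auto
      ultimately show False using C good_def by auto
    qed
    have cC: "comp_nontrivial V E \<le> comp_nontrivial V E' + (if degree E w = 1 then 1 else 0)"
    proof -
      have "comp_nontrivial V E = card CE" unfolding comp_nontrivial_def CE_def ..
      also have "... \<le> card (CE \<inter> good) + card (CE - good)"
        by (metis Int_Diff_Un card_Un_le)
      also have "card (CE \<inter> good) \<le> card CE'"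
        using card_mono[OF _ good_sub] card_image_le[OF finCE', of "\<lambda>D. R `` D"] finCE' by auto
      also have "card (CE - good) \<le> (if degree E w = 1 then 1 else 0)"
      proof (cases "degree E w = 1")
        case True then show ?thesis using card_mono[OF _ bad_sub] by simp
      next
        case False
        then have h: "CE - good = {}" using bad_empty dw1 by simp
        show ?thesis unfolding h using False by simp
      qed
      finally show ?thesis unfolding comp_nontrivial_def CE'_def by simp
    qed
    show ?thesis using IH sA sL cC c_def dw1 by (simp split: if_splits)
  qed
qed

theorem theorem8:
  fixes VF :: "'a set" and EF :: "'a set set" and VG :: "'b set" and EG :: "'b set set"
    and n :: nat
  assumes "forest VF EF" and "graph VG EG"
    and "card VF = n" and "card VG = n"
    and "3 * max_degree VG EG + leaves VF EF < n + 2 * comp_nontrivial VF EF"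
  shows "packs VG EG VF EF"
proof -
  have "sdeg VF EF + 2 * comp_nontrivial VF EF \<le> leaves VF EF" using comp_leaves[OF assms(1)] .
  then have "3 * max_degree VG EG + sdeg VF EF < card VF" using assms(3,5) by arith
  then show ?thesis using pack_main[OF assms(1,2)] assms(3,4) by simp
qed

end
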